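(* Let $(g,f)$ be a Riordan matrix with $A$-sequence $(a_j)_{j\ge0}$, $A(t)=\sum_{j\ge0}a_jt^j$. Let $c_j=[t^j]\,1/A(t)$ for $j\ge0$, and put $\tilde c_0=\tilde c_1=0$ and $\tilde c_j=c_{j-2}$ for $j\ge2$. Then a sequence $(b_j)_{j\ge0}$ is a type-I $B$-sequence of $(g,f)$ if and only if $a_0=1$, $a_2=0$, for every $\ell\ge0$ $$b_\ell=a_{2\ell+1}-\sum_{\mathbf i=(i_1,\dots,i_k)\in\mathcal D_{2\ell,\ell-1}} b_k\,\tilde c_{i_1}\tilde c_{i_2}\cdots\tilde c_{i_k},$$ and for every $\ell\ge2$ $$a_{2\ell}=\sum_{\mathbf i=(i_1,\dots,i_k)\in\mathcal D_{2\ell-1,\ell-1}} b_k\,\tilde c_{i_1}\tilde c_{i_2}\cdots\tilde c_{i_k}.$$ (The right-hand side of the formula for $b_\ell$ involves only $b_k$ with $k\le\ell-1$, so the $b_\ell$ are determined recursively from the $a_j$, with $a_{2\ell+1}$ arbitrary; e.g. $b_0=a_1$, $b_1=a_3$, $a_4=-a_1a_3$, $b_2=a_5-b_1(a_1^2-a_2)$.)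
   Context: Let $K$ be $\mathbb{R}$ or $\mathbb{C}$. A (proper) Riordan matrix is a pair $(g,f)$ of formal power series in $K[[t]]$ with $g(0)=1$, $f(0)=0$, $f'(0)\neq 0$, identified with the infinite lower triangular matrix $(d_{n,k})_{n,k\ge0}$, $d_{n,k}=[t^n]g(t)f(t)^k$; we set $d_{n,k}=0$ if $n<0$, $k<0$ or $k>n$. The $A$-sequence $(a_j)_{j\ge0}$ is the unique sequence whose generating function $A(t)$ satisfies $f(t)=tA(f(t))$ (so $a_0\neq0$). A type-I $B$-sequence of $(g,f)$ is a sequence $(b_j)_{j\ge0}$ such that $d_{n+1,k}=d_{n,k-1}+\sum_{j\ge0}b_j d_{n-j,k+j}$ for all $n\ge0$ and $k\ge1$. For integers $n\ge1$ and $m\ge1$, $\mathcal D_{n,m}$ denotes the set of compositions of $n$ into at most $m$ parts, i.e. tuples $(i_1,\dots,i_k)$ of positive integers with $1\le k\le m$ and $i_1+\cdots+i_k=n$; $k$ is the length of the tuple. By convention $\mathcal D_{0,-1}=\mathcal D_{2,0}=\emptyset$ (empty sums are $0$). *)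

theory Defs
  imports "HOL-Computational_Algebra.Formal_Power_Series"
begin

definition riordan :: "'a::field fps \<Rightarrow> 'a fps \<Rightarrow> bool" where
  "riordan g f \<longleftrightarrow> fps_nth g 0 = 1 \<and> fps_nth f 0 = 0 \<and> fps_nth f 1 \<noteq> 0"

definition riordan_entry :: "'a::field fps \<Rightarrow> 'a fps \<Rightarrow> int \<Rightarrow> int \<Rightarrow> 'a" where
  "riordan_entry g f n k =
     (if n < 0 \<or> k < 0 \<or> k > n then 0 else fps_nth (g * f ^ nat k) (nat n))"

definition is_A_series :: "'a::field fps \<Rightarrow> 'a fps \<Rightarrow> bool" where
  "is_A_series f A \<longleftrightarrow> f = fps_X * fps_compose A f"

definition is_typeI_B_seq :: "'a::field fps \<Rightarrow> 'a fps \<Rightarrow> (nat \<Rightarrow> 'a) \<Rightarrow> bool" where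
  "is_typeI_B_seq g f b \<longleftrightarrow>
     (\<forall>n::nat. \<forall>k::nat. k \<ge> 1 \<longrightarrow>
        riordan_entry g f (int n + 1) (int k) =
          riordan_entry g f (int n) (int k - 1)
          + (\<Sum>j\<le>n. b j * riordan_entry g f (int n - int j) (int k + int j)))"

definition compositions :: "nat \<Rightarrow> int \<Rightarrow> nat list set" where
  "compositions n m = {is. 1 \<le> length is \<and> int (length is) \<le> m \<and>
                          (\<forall>i\<in>set is. 0 < i) \<and> sum_list is = n}"

end

theory Submission
  imports Defs
begin
unbundle fps_syntax

definition compk :: "nat \<Rightarrow> nat \<Rightarrow> nat list set" where
  "compk n k = {is. length is = k \<and> (\<forall>i\<in>set is. 0 < i) \<and> sum_list is = n}"

lemma compk_sub: "compk n k \<subseteq> {xs. set xs \<subseteq> {0..n} \<and> length xs = k}"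
  unfolding compk_def by (auto simp: member_le_sum_list)

lemma compk_finite: "finite (compk n k)"
  by (rule finite_subset[OF compk_sub finite_lists_length_eq]) simp

lemma compk_0: "compk n 0 = (if n = 0 then {[]} else {})"
  by (auto simp: compk_def)

lemma compk_Suc: "compk n (Suc k) = (\<lambda>(i,r). i # r) ` (SIGMA i:{1..n}. compk (n - i) k)"
proof (intro equalityI subsetI)
  fix xs assume a: "xs \<in> compk n (Suc k)"
  from a obtain i r where xs: "xs = i # r" unfolding compk_def by (cases xs) auto
  with a have "(i, r) \<in> (SIGMA i:{1..n}. compk (n - i) k)" by (auto simp: compk_def)
  then show "xs \<in> (\<lambda>(i,r). i # r) ` (SIGMA i:{1..n}. compk (n - i) k)"
    unfolding xs by (rule rev_image_eqI) simp
next
  fix xs assume "xs \<in> (\<lambda>(i,r). i # r) ` (SIGMA i:{1..n}. compk (n - i) k)"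
  then obtain i r where "xs = i # r" "i \<in> {1..n}" "r \<in> compk (n - i) k" by auto
  then show "xs \<in> compk n (Suc k)" by (auto simp: compk_def)
qed

lemma power_nth_compk:
  fixes P :: "'a::comm_ring_1 fps"
  assumes P0: "P $ 0 = 0"
  shows "(P ^ k) $ n = (\<Sum>is\<in>compk n k. prod_list (map (($) P) is))"
proof (induction k arbitrary: n)
  case 0
  then show ?case by (simp add: compk_0)
next
  case (Suc k)
  have "(P ^ Suc k) $ n = (\<Sum>i=0..n. P$i * (P^k)$(n - i))" by (simp add: fps_mult_nth)
  also have "\<dots> = (\<Sum>i=1..n. P$i * (P^k)$(n - i))"
    using P0 by (cases n) (simp_all add: sum.atLeast_Suc_atMost)
  also have "\<dots> = (\<Sum>i=1..n. \<Sum>r\<in>compk (n - i) k. prod_list (map (($) P) (i # r)))"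
    by (simp add: Suc.IH sum_distrib_left)
  also have "\<dots> = (\<Sum>(i,r)\<in>(SIGMA i:{1..n}. compk (n - i) k). prod_list (map (($) P) (i # r)))"
    by (rule sum.Sigma) (auto simp: compk_finite)
  also have "\<dots> = (\<Sum>is\<in>compk n (Suc k). prod_list (map (($) P) is))"
    unfolding compk_Suc
    by (subst sum.reindex) (auto simp: inj_on_def intro!: sum.cong split: prod.splits)
  finally show ?case .
qed

lemma compositions_union: "compositions n m = (\<Union>k\<in>{1..nat m}. compk n k)"
  unfolding compositions_def compk_def
  by (intro equalityI subsetI) (auto simp: le_nat_iff)

lemma compositions_sum:
  fixes P :: "'a::comm_ring_1 fps"
  assumes P0: "P $ 0 = 0"
  shows "(\<Sum>is\<in>compositions n m. b (length is) * prod_list (map (($) P) is))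
       = (\<Sum>k\<in>{1..nat m}. b k * (P ^ k) $ n)"
proof -
  have "(\<Sum>is\<in>compositions n m. b (length is) * prod_list (map (($) P) is))
      = (\<Sum>k\<in>{1..nat m}. \<Sum>is\<in>compk n k. b (length is) * prod_list (map (($) P) is))"
    unfolding compositions_union
    by (rule sum.UNION_disjoint) (auto simp: compk_finite, auto simp: compk_def)
  also have "\<dots> = (\<Sum>k\<in>{1..nat m}. b k * (P ^ k) $ n)"
    by (rule sum.cong) (auto simp: power_nth_compk[OF P0] sum_distrib_left compk_def)
  finally show ?thesis .
qed


lemma entry_eq:
  fixes g f :: "'a::field fps"
  assumes f0: "f $ 0 = 0"
  shows "riordan_entry g f (int n) (int k) = (g * f^k) $ n"
proof (cases "k > n")
  case True
  have "(g * f^k) $ n = (\<Sum>i=0..n. g$i * (f^k)$(n - i))" by (simp add: fps_mult_nth)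
  also have "\<dots> = 0" using startsby_zero_power_prefix[OF f0, of k] True
    by (intro sum.neutral) auto
  finally show ?thesis using True by (simp add: riordan_entry_def)
qed (simp add: riordan_entry_def)

lemma mult_nth_cong:
  fixes P Q R :: "'a::comm_ring_1 fps"
  assumes "\<And>m. m \<le> n \<Longrightarrow> Q $ m = R $ m"
  shows "(P * Q) $ n = (P * R) $ n"
  unfolding fps_mult_nth using assms by (intro sum.cong) auto

lemma trunc_compose:
  fixes Q :: "'a::comm_ring_1 fps"
  assumes Q0: "Q $ 0 = 0" and mn: "m \<le> n"
  shows "(\<Sum>j\<le>n. fps_const (b j) * Q^j) $ m = (Abs_fps b oo Q) $ m"
proof -
  have "(\<Sum>j\<le>n. fps_const (b j) * Q^j) $ m = (\<Sum>j\<le>n. b j * (Q^j) $ m)"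
    by (simp add: fps_sum_nth)
  also have "\<dots> = (\<Sum>j=0..m. b j * (Q^j) $ m)"
  proof (rule sum.mono_neutral_right)
    show "\<forall>i\<in>{..n} - {0..m}. b i * (Q^i) $ m = 0"
      using startsby_zero_power_prefix[OF Q0] by auto
  qed (use mn in auto)
  also have "\<dots> = (Abs_fps b oo Q) $ m" by (simp add: fps_compose_nth)
  finally show ?thesis .
qed

lemma Bsum_eq:
  fixes g f :: "'a::field fps"
  assumes f0: "f $ 0 = 0"
  shows "(\<Sum>j\<le>n. b j * (g * f^(k+j)) $ (n - j)) = (g * f^k * (Abs_fps b oo (fps_X * f))) $ n"
proof -
  have "(\<Sum>j\<le>n. b j * (g * f^(k+j)) $ (n - j)) = (\<Sum>j\<le>n. b j * (fps_X^j * (g * f^(k+j))) $ n)"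
    by (intro sum.cong) (auto simp: fps_X_power_mult_nth)
  also have "\<dots> = (\<Sum>j\<le>n. fps_const (b j) * (g * f^k * (fps_X * f)^j)) $ n"
  proof -
    have e: "fps_X^j * (g * f^(k+j)) = g * f^k * (fps_X * f)^j" for j
      by (simp add: power_add power_mult_distrib mult_ac)
    show ?thesis unfolding fps_sum_nth fps_mult_left_const_nth e ..
  qed
  also have "\<dots> = (g * f^k * (\<Sum>j\<le>n. fps_const (b j) * (fps_X * f)^j)) $ n"
    by (simp add: sum_distrib_left mult_ac)
  also have "\<dots> = (g * f^k * (Abs_fps b oo (fps_X * f))) $ n"
    by (rule mult_nth_cong) (rule trunc_compose, use f0 in auto)
  finally show ?thesis .
qed


lemma all_ge1: "(\<forall>(n::nat) (k::nat). 1 \<le> k \<longrightarrow> P n k) \<longleftrightarrow> (\<forall>k n. P n (Suc k))"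
proof safe
  fix n k :: nat assume "\<forall>k n. P n (Suc k)" "1 \<le> k"
  then show "P n k" by (cases k) auto
qed auto

lemma Bseq_series:
  fixes g f :: "'a::field fps" and b :: "nat \<Rightarrow> 'a"
  assumes R: "riordan g f"
  defines "W \<equiv> Abs_fps b oo (fps_X * f)"
  shows "is_typeI_B_seq g f b \<longleftrightarrow> f = fps_X + fps_X * f * W"
proof -
  from R have g0: "g $ 0 = 1" and f0: "f $ 0 = 0" and f1: "f $ 1 \<noteq> 0"
    by (auto simp: riordan_def)
  have cond: "riordan_entry g f (int n + 1) (int (Suc k)) =
          riordan_entry g f (int n) (int (Suc k) - 1)
          + (\<Sum>j\<le>n. b j * riordan_entry g f (int n - int j) (int (Suc k) + int j))
     \<longleftrightarrow> (g * f^Suc k) $ Suc n = (g * f^k) $ n + (g * f^Suc k * W) $ n" for n k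
  proof -
    have 1: "riordan_entry g f (int n + 1) (int (Suc k)) = (g * f^Suc k) $ Suc n"
      using entry_eq[OF f0, of g "Suc n" "Suc k"] by (simp add: add.commute)
    have 2: "riordan_entry g f (int n) (int (Suc k) - 1) = (g * f^k) $ n"
      using entry_eq[OF f0, of g n k] by simp
    have 3: "riordan_entry g f (int n - int j) (int (Suc k) + int j) = (g * f^(Suc k + j)) $ (n - j)"
      if "j \<le> n" for j
      using entry_eq[OF f0, of g "n - j" "Suc k + j"] that by (simp add: of_nat_diff add.assoc)
    have "(\<Sum>j\<le>n. b j * riordan_entry g f (int n - int j) (int (Suc k) + int j))
        = (\<Sum>j\<le>n. b j * (g * f^(Suc k + j)) $ (n - j))"
      using 3 by (intro sum.cong) auto
    also have "\<dots> = (g * f^Suc k * W) $ n" unfolding W_def by (rule Bsum_eq[OF f0])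
    finally show ?thesis using 1 2 by simp
  qed
  have ser: "(\<forall>n. (g * f^Suc k) $ Suc n = (g * f^k) $ n + (g * f^Suc k * W) $ n)
     \<longleftrightarrow> g * f^Suc k = fps_X * (g * f^k) + fps_X * (g * f^Suc k * W)" for k
  proof
    assume H: "\<forall>n. (g * f^Suc k) $ Suc n = (g * f^k) $ n + (g * f^Suc k * W) $ n"
    show "g * f^Suc k = fps_X * (g * f^k) + fps_X * (g * f^Suc k * W)"
    proof (rule fps_ext)
      fix n show "(g * f^Suc k) $ n = (fps_X * (g * f^k) + fps_X * (g * f^Suc k * W)) $ n"
      proof (cases n)
        case 0 then show ?thesis using f0 by (simp add: fps_nth_power_0)
      next
        case (Suc m) then show ?thesis using H by (simp only: fps_add_nth fps_X_mult_nth) simp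
      qed
    qed
  next
    assume H: "g * f^Suc k = fps_X * (g * f^k) + fps_X * (g * f^Suc k * W)"
    show "\<forall>n. (g * f^Suc k) $ Suc n = (g * f^k) $ n + (g * f^Suc k * W) $ n"
      by (subst H) simp
  qed
  have "is_typeI_B_seq g f b \<longleftrightarrow>
        (\<forall>k. g * f^Suc k = fps_X * (g * f^k) + fps_X * (g * f^Suc k * W))"
  proof -
    have "is_typeI_B_seq g f b \<longleftrightarrow> (\<forall>k. \<forall>n. riordan_entry g f (int n + 1) (int (Suc k)) =
          riordan_entry g f (int n) (int (Suc k) - 1)
          + (\<Sum>j\<le>n. b j * riordan_entry g f (int n - int j) (int (Suc k) + int j)))"
      unfolding is_typeI_B_seq_def by (rule all_ge1)
    also have "\<dots> \<longleftrightarrow> (\<forall>k. \<forall>n. (g * f^Suc k) $ Suc n = (g * f^k) $ n + (g * f^Suc k * W) $ n)"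
      using cond by presburger
    also have "\<dots> \<longleftrightarrow> (\<forall>k. g * f^Suc k = fps_X * (g * f^k) + fps_X * (g * f^Suc k * W))"
      using ser by presburger
    finally show ?thesis .
  qed
  also have "\<dots> \<longleftrightarrow> f = fps_X + fps_X * f * W"
  proof
    assume "\<forall>k. g * f^Suc k = fps_X * (g * f^k) + fps_X * (g * f^Suc k * W)"
    then have "g * f^Suc 0 = fps_X * (g * f^0) + fps_X * (g * f^Suc 0 * W)" by blast
    then have "g * f = fps_X * g + fps_X * (g * f * W)" by simp
    then have "g * (f - (fps_X + fps_X * f * W)) = 0" by (simp add: algebra_simps)
    moreover have "g \<noteq> 0" using g0 by auto
    ultimately show "f = fps_X + fps_X * f * W" by simp
  next
    assume "f = fps_X + fps_X * f * W"
    then have "g * f^k * f = g * f^k * (fps_X + fps_X * f * W)" for k by simp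
    then show "\<forall>k. g * f^Suc k = fps_X * (g * f^k) + fps_X * (g * f^Suc k * W)"
      by (simp add: algebra_simps)
  qed
  finally show ?thesis .
qed


lemma compose_inj:
  fixes P Q f :: "'a::field fps"
  assumes f0: "f $ 0 = 0" and f1: "f $ 1 \<noteq> 0" and eq: "P oo f = Q oo f"
  shows "P = Q"
proof -
  have i0: "fps_inv f $ 0 = 0" by (simp add: fps_inv_def)
  have "P = P oo (f oo fps_inv f)" by (simp add: fps_inv_right[OF f0 f1])
  also have "\<dots> = (P oo f) oo fps_inv f" by (rule fps_compose_assoc[OF i0 f0])
  also have "\<dots> = (Q oo f) oo fps_inv f" by (simp add: eq)
  also have "\<dots> = Q oo (f oo fps_inv f)" by (rule fps_compose_assoc[OF i0 f0, symmetric])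
  also have "\<dots> = Q" by (simp add: fps_inv_right[OF f0 f1])
  finally show ?thesis .
qed

lemma A_series_step:
  fixes g f A :: "'a::field fps" and b :: "nat \<Rightarrow> 'a"
  assumes R: "riordan g f" and AS: "is_A_series f A"
  defines "D \<equiv> fps_X^2 * inverse A"
  shows "is_typeI_B_seq g f b \<longleftrightarrow> A = 1 + fps_X * (Abs_fps b oo D)"
proof -
  define W where "W = Abs_fps b oo (fps_X * f)"
  from R have f0: "f $ 0 = 0" and f1: "f $ 1 \<noteq> 0"
    by (auto simp: riordan_def)
  have fA: "f = fps_X * (A oo f)" using AS by (simp add: is_A_series_def)
  have A0: "A $ 0 \<noteq> 0"
  proof -
    have "f $ 1 = (A oo f) $ 0" by (subst fA) simp
    then show ?thesis using f1 by simp
  qed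
  have Af0: "(A oo f) $ 0 \<noteq> 0" using A0 by simp
  have D0: "D $ 0 = 0" by (simp add: D_def fps_X_power_mult_nth)
  have "D oo f = (fps_X oo f)^2 * (inverse A oo f)"
    unfolding D_def by (simp add: fps_compose_mult_distrib[OF f0] fps_compose_power[OF f0])
  also have "\<dots> = f * f * inverse (A oo f)"
    by (simp add: f0 fps_inverse_compose[OF f0 A0] power2_eq_square)
  also have "\<dots> = fps_X * f * ((A oo f) * inverse (A oo f))"
    by (subst (1) fA) (simp add: mult_ac)
  also have "\<dots> = fps_X * f" using inverse_mult_eq_1'[OF Af0] by simp
  finally have Df: "D oo f = fps_X * f" .
  have Ef: "(Abs_fps b oo D) oo f = W"
    unfolding W_def Df[symmetric] by (rule fps_compose_assoc[OF f0 D0, symmetric])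
  have comp: "(1 + fps_X * (Abs_fps b oo D)) oo f = 1 + f * W"
    by (simp add: fps_compose_add_distrib fps_compose_mult_distrib[OF f0] Ef f0)
  have "is_typeI_B_seq g f b \<longleftrightarrow> f = fps_X + fps_X * f * W"
    unfolding W_def by (rule Bseq_series[OF R])
  also have "\<dots> \<longleftrightarrow> fps_X * (A oo f) = fps_X * (1 + f * W)"
    by (subst (1) fA) (simp add: algebra_simps)
  also have "\<dots> \<longleftrightarrow> A oo f = 1 + f * W" by simp
  also have "\<dots> \<longleftrightarrow> A = 1 + fps_X * (Abs_fps b oo D)"
    unfolding comp[symmetric] using compose_inj[OF f0 f1] by blast
  finally show ?thesis .
qed


lemma coeff_conditions:
  fixes A :: "'a::field fps" and b :: "nat \<Rightarrow> 'a"
  assumes A0: "A $ 0 = 1"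
  defines "D \<equiv> fps_X^2 * inverse A"
  defines "E \<equiv> Abs_fps b oo D"
  defines "F \<equiv> (\<lambda>n m. \<Sum>is\<in>compositions n m. b (length is) * prod_list (map (($) D) is))"
  shows "(\<forall>n. A $ Suc n = E $ n) \<longleftrightarrow>
     A $ 2 = 0 \<and> (\<forall>l. b l = A $ (2*l+1) - F (2*l) (int l - 1)) \<and>
     (\<forall>l. l \<ge> 2 \<longrightarrow> A $ (2*l) = F (2*l - 1) (int l - 1))"
proof -
  have D0: "D $ 0 = 0" by (simp add: D_def fps_X_power_mult_nth)
  have Dk: "D^k = fps_X^(2*k) * (inverse A)^k" for k
    by (simp add: D_def power_mult_distrib power_mult)
  have Dz: "(D^k) $ n = 0" if "n < 2*k" for n k
    using that by (simp add: Dk fps_X_power_mult_nth)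
  have Dd: "(D^k) $ (2*k) = 1" for k
    by (simp add: Dk fps_X_power_mult_nth fps_nth_power_0 A0)
  have Fs: "F n m = (\<Sum>k\<in>{1..nat m}. b k * (D ^ k) $ n)" for n m
    unfolding F_def by (rule compositions_sum[OF D0])
  have En: "E $ n = (\<Sum>k=0..n. b k * (D^k) $ n)" for n
    by (simp add: E_def fps_compose_nth)
  have Et: "E $ n = (\<Sum>k\<in>{1..m}. b k * (D^k) $ n)" if "1 \<le> n" "m \<le> n" "n < 2*(m+1)" for n m
  proof -
    have "E $ n = b 0 * (D^0) $ n + (\<Sum>k=Suc 0..n. b k * (D^k) $ n)"
      unfolding En by (rule sum.atLeast_Suc_atMost) simp
    also have "b 0 * (D^0) $ n = 0" using that by simp
    also have "(\<Sum>k=Suc 0..n. b k * (D^k) $ n) = (\<Sum>k\<in>{1..m}. b k * (D^k) $ n)"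
    proof (rule sum.mono_neutral_right)
      show "\<forall>i\<in>{Suc 0..n} - {1..m}. b i * (D^i) $ n = 0"
        using that Dz by auto
    qed (use that in auto)
    finally show ?thesis by simp
  qed
  have E0: "E $ 0 = b 0" by (simp add: En)
  have even: "A $ Suc (2*l) = E $ (2*l) \<longleftrightarrow> b l = A $ (2*l+1) - F (2*l) (int l - 1)" for l
  proof (cases l)
    case 0
    have "F 0 (-1) = 0" by (simp add: Fs)
    then show ?thesis using 0 E0 by auto
  next
    case (Suc p)
    have "E $ (2*l) = (\<Sum>k\<in>{1..Suc p}. b k * (D^k) $ (2*l))"
      by (rule Et) (use Suc in auto)
    also have "\<dots> = (\<Sum>k\<in>{1..p}. b k * (D^k) $ (2*l)) + b l"
      using Dd[of l] Suc by simp
    also have "(\<Sum>k\<in>{1..p}. b k * (D^k) $ (2*l)) = F (2*l) (int l - 1)"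
      by (simp add: Fs Suc)
    finally show ?thesis by (auto simp: algebra_simps)
  qed
  have odd: "A $ (2*l) = E $ (2*l - 1) \<longleftrightarrow> A $ (2*l) = F (2*l - 1) (int l - 1)" if "l \<ge> 1" for l
  proof -
    have "E $ (2*l - 1) = (\<Sum>k\<in>{1..l-1}. b k * (D^k) $ (2*l - 1))"
      by (rule Et) (use that in auto)
    also have "\<dots> = F (2*l - 1) (int l - 1)"
      using that by (simp add: Fs nat_diff_distrib)
    finally show ?thesis by simp
  qed
  have F10: "F 1 0 = 0" by (simp add: Fs)
  show ?thesis
  proof
    assume H: "\<forall>n. A $ Suc n = E $ n"
    have "A $ Suc 1 = E $ 1" using H by blast
    then have "A $ (2*1) = E $ (2*1 - 1)" by (simp add: numeral_2_eq_2)
    then have "A $ (2*1) = F (2*1 - 1) (int 1 - 1)" using odd[of 1] by simp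
    then have "A $ 2 = 0" using F10 by simp
    moreover have "\<forall>l. b l = A $ (2*l+1) - F (2*l) (int l - 1)"
    proof
      fix l
      have "A $ Suc (2*l) = E $ (2*l)" using H by blast
      then show "b l = A $ (2*l+1) - F (2*l) (int l - 1)" using even[of l] by blast
    qed
    moreover have "\<forall>l. l \<ge> 2 \<longrightarrow> A $ (2*l) = F (2*l - 1) (int l - 1)"
    proof safe
      fix l :: nat assume "2 \<le> l"
      then have e: "Suc (2*l - 1) = 2*l" by simp
      have "A $ Suc (2*l - 1) = E $ (2*l - 1)" using H by blast
      then have "A $ (2*l) = E $ (2*l - 1)" unfolding e .
      moreover have "l \<ge> 1" using \<open>2 \<le> l\<close> by simp
      ultimately show "A $ (2*l) = F (2*l - 1) (int l - 1)" using odd[of l] by blast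
    qed
    ultimately show "A $ 2 = 0 \<and> (\<forall>l. b l = A $ (2*l+1) - F (2*l) (int l - 1)) \<and>
     (\<forall>l. l \<ge> 2 \<longrightarrow> A $ (2*l) = F (2*l - 1) (int l - 1))" by blast
  next
    assume H: "A $ 2 = 0 \<and> (\<forall>l. b l = A $ (2*l+1) - F (2*l) (int l - 1)) \<and>
     (\<forall>l. l \<ge> 2 \<longrightarrow> A $ (2*l) = F (2*l - 1) (int l - 1))"
    show "\<forall>n. A $ Suc n = E $ n"
    proof
      fix n
      show "A $ Suc n = E $ n"
      proof (cases "even n")
        case True
        then obtain l where n: "n = 2*l" by (auto elim: evenE)
        have "b l = A $ (2*l+1) - F (2*l) (int l - 1)" using H by blast
        then show ?thesis using even[of l] n by simp
      next
        case False
        define l where "l = Suc n div 2"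
        have sn: "Suc n = 2*l" using False unfolding l_def by presburger
        have l1: "l \<ge> 1" using sn by simp
        have n: "n = 2*l - 1" using sn by simp
        show ?thesis
        proof (cases "l = 1")
          case True
          then have "A $ (2*l) = F (2*l - 1) (int l - 1)" using H F10 by simp
          then have "A $ (2*l) = E $ (2*l - 1)" using odd[of l] l1 by blast
          then show ?thesis using n sn by simp
        next
          case False
          then have "A $ (2*l) = F (2*l - 1) (int l - 1)" using H l1 by simp
          then have "A $ (2*l) = E $ (2*l - 1)" using odd[of l] l1 by blast
          then show ?thesis using n sn by simp
        qed
      qed
    qed
  qed
qed


theorem theorem2p3:
  fixes g f A :: "'a::real_normed_field fps" and b :: "nat \<Rightarrow> 'a"
  assumes "riordan g f"
    and "is_A_series f A"
  defines "c \<equiv> (\<lambda>j. fps_nth (inverse A) j)"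
  defines "ct \<equiv> (\<lambda>j. if j < 2 then 0 else c (j - 2))"
  shows "is_typeI_B_seq g f b \<longleftrightarrow>
     fps_nth A 0 = 1 \<and> fps_nth A 2 = 0 \<and>
     (\<forall>l::nat. b l = fps_nth A (2*l+1)
        - (\<Sum>is\<in>compositions (2*l) (int l - 1). b (length is) * prod_list (map ct is))) \<and>
     (\<forall>l::nat. l \<ge> 2 \<longrightarrow> fps_nth A (2*l) =
        (\<Sum>is\<in>compositions (2*l - 1) (int l - 1). b (length is) * prod_list (map ct is)))"
proof -
  define D where "D = fps_X^2 * inverse A"
  define E where "E = Abs_fps b oo D"
  have ct: "ct = ($) D"
    by (rule ext) (simp add: ct_def c_def D_def fps_X_power_mult_nth)
  have "is_typeI_B_seq g f b \<longleftrightarrow> A = 1 + fps_X * E"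
    unfolding E_def D_def by (rule A_series_step[OF assms(1,2)])
  also have "\<dots> \<longleftrightarrow> A $ 0 = 1 \<and> (\<forall>n. A $ Suc n = E $ n)"
  proof
    assume "A = 1 + fps_X * E"
    then show "A $ 0 = 1 \<and> (\<forall>n. A $ Suc n = E $ n)" by simp
  next
    assume H: "A $ 0 = 1 \<and> (\<forall>n. A $ Suc n = E $ n)"
    show "A = 1 + fps_X * E"
    proof (rule fps_ext)
      fix n show "A $ n = (1 + fps_X * E) $ n" using H by (cases n) simp_all
    qed
  qed
  also have "\<dots> \<longleftrightarrow> A $ 0 = 1 \<and> A $ 2 = 0 \<and>
     (\<forall>l. b l = A $ (2*l+1) - (\<Sum>is\<in>compositions (2*l) (int l - 1). b (length is) * prod_list (map (($) D) is))) \<and>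
     (\<forall>l. l \<ge> 2 \<longrightarrow> A $ (2*l) = (\<Sum>is\<in>compositions (2*l - 1) (int l - 1). b (length is) * prod_list (map (($) D) is)))"
    using coeff_conditions[of A b] unfolding D_def E_def by blast
  finally show ?thesis unfolding ct .
qed

end
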